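(* There exists a RobMCF instance on an acyclic digraph with two scenarios $\Lambda=\{1,2\}$, a unique source $s$ and a unique sink $t$, with $b^1(s)<b^2(s)$, and an optimal robust $\boldsymbol b$-flow $\boldsymbol f=(f^1,f^2)$ such that $c(f^2)<c(f^1)=c(\boldsymbol f)$; i.e., the cost of an optimal robust flow is not necessarily attained by the scenario flow sending the maximum demand.
   Context: A RobMCF instance $(G,u,c,\boldsymbol b)$ consists of a finite directed graph (parallel arcs allowed) $G=(V,A)$ whose arc set is partitioned as $A=A^{\mathrm{fix}}\cup A^{\mathrm{free}}$ into fixed and free arcs, capacities $u:A\to\mathbb Z_{\ge0}$, costs $c:A\to\mathbb Z_{\ge0}$, a finite nonempty set of scenarios $\Lambda$, and for each $\lambda\in\Lambda$ balances $b^\lambda:V\to\mathbb Z$ with $\sum_{v\in V}b^\lambda(v)=0$; $\boldsymbol b=(b^\lambda)_{\lambda\in\Lambda}$. A $b^\lambda$-flow is a function $f^\lambda:A\to\mathbb Z_{\ge0}$ with $f^\lambda(a)\le u(a)$ for all $a\in A$ and $\sum_{a=(v,w)\in A}f^\lambda(a)-\sum_{a=(w,v)\in A}f^\lambda(a)=b^\lambda(v)$ for all $v\in V$ (outflow minus inflow); its cost is $c(f^\lambda)=\sum_{a\in A}c(a)f^\lambda(a)$. A robust $\boldsymbol b$-flow is a tuple $\boldsymbol f=(f^\lambda)_{\lambda\in\Lambda}$ of $b^\lambda$-flows with $f^\lambda(a)=f^{\lambda'}(a)$ for all $a\in A^{\mathrm{fix}}$ and all $\lambda,\lambda'\in\Lambda$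 (consistent flow constraints); its cost is $c(\boldsymbol f)=\max_{\lambda\in\Lambda}c(f^\lambda)$. An optimal robust $\boldsymbol b$-flow is one of minimum cost. A vertex $v$ is a source (sink) in scenario $\lambda$ if $b^\lambda(v)>0$ ($b^\lambda(v)<0$). The instance has a unique source $s$ (unique sink $t$) if in every scenario $s$ is the only source ($t$ is the only sink). *)

theory Defs
  imports Main
begin

text \<open>A RobMCF instance. Arcs are abstract objects with tail and head
 (so parallel arcs are allowed). Scenarios are indexed by 's.\<close>
record ('v, 'a, 's) robmcf =
  verts :: "'v set"
  arcs :: "'a set"
  tail :: "'a \<Rightarrow> 'v"
  head :: "'a \<Rightarrow> 'v"
  fixed_arcs :: "'a set"
  cap :: "'a \<Rightarrow> nat"
  cost :: "'a \<Rightarrow> nat"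
  scen :: "'s set"
  bal :: "'s \<Rightarrow> 'v \<Rightarrow> int"

definition wf_robmcf :: "('v, 'a, 's) robmcf \<Rightarrow> bool" where
  "wf_robmcf I \<longleftrightarrow>
     finite (verts I) \<and> finite (arcs I) \<and>
     (\<forall>a\<in>arcs I. tail I a \<in> verts I \<and> head I a \<in> verts I) \<and>
     fixed_arcs I \<subseteq> arcs I \<and>
     finite (scen I) \<and> scen I \<noteq> {} \<and>
     (\<forall>l\<in>scen I. (\<Sum>v\<in>verts I. bal I l v) = 0)"

definition arc_rel :: "('v, 'a, 's) robmcf \<Rightarrow> ('v \<times> 'v) set" where
  "arc_rel I = {(tail I a, head I a) | a. a \<in> arcs I}"

definition acyclic_instance :: "('v, 'a, 's) robmcf \<Rightarrow> bool" where
  "acyclic_instance I \<longleftrightarrow> acyclic (arc_rel I)"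

definition is_bflow :: "('v, 'a, 's) robmcf \<Rightarrow> ('v \<Rightarrow> int) \<Rightarrow> ('a \<Rightarrow> nat) \<Rightarrow> bool" where
  "is_bflow I bl f \<longleftrightarrow>
     (\<forall>a\<in>arcs I. f a \<le> cap I a) \<and>
     (\<forall>v\<in>verts I.
        (\<Sum>a\<in>{a\<in>arcs I. tail I a = v}. int (f a))
      - (\<Sum>a\<in>{a\<in>arcs I. head I a = v}. int (f a)) = bl v)"

definition flow_cost :: "('v, 'a, 's) robmcf \<Rightarrow> ('a \<Rightarrow> nat) \<Rightarrow> nat" where
  "flow_cost I f = (\<Sum>a\<in>arcs I. cost I a * f a)"

definition is_robust_flow :: "('v, 'a, 's) robmcf \<Rightarrow> ('s \<Rightarrow> 'a \<Rightarrow> nat) \<Rightarrow> bool" where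
  "is_robust_flow I F \<longleftrightarrow>
     (\<forall>l\<in>scen I. is_bflow I (bal I l) (F l)) \<and>
     (\<forall>a\<in>fixed_arcs I. \<forall>l\<in>scen I. \<forall>l'\<in>scen I. F l a = F l' a)"

definition robust_cost :: "('v, 'a, 's) robmcf \<Rightarrow> ('s \<Rightarrow> 'a \<Rightarrow> nat) \<Rightarrow> nat" where
  "robust_cost I F = Max ((\<lambda>l. flow_cost I (F l)) ` scen I)"

definition is_optimal_robust_flow :: "('v, 'a, 's) robmcf \<Rightarrow> ('s \<Rightarrow> 'a \<Rightarrow> nat) \<Rightarrow> bool" where
  "is_optimal_robust_flow I F \<longleftrightarrow>
     is_robust_flow I F \<and>
     (\<forall>G. is_robust_flow I G \<longrightarrow> robust_cost I F \<le> robust_cost I G)"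

definition unique_source :: "('v, 'a, 's) robmcf \<Rightarrow> 'v \<Rightarrow> bool" where
  "unique_source I s \<longleftrightarrow> s \<in> verts I \<and>
     (\<forall>l\<in>scen I. \<forall>v\<in>verts I. bal I l v > 0 \<longleftrightarrow> v = s)"

definition unique_sink :: "('v, 'a, 's) robmcf \<Rightarrow> 'v \<Rightarrow> bool" where
  "unique_sink I t \<longleftrightarrow> t \<in> verts I \<and>
     (\<forall>l\<in>scen I. \<forall>v\<in>verts I. bal I l v < 0 \<longleftrightarrow> v = t)"

end

theory Submission
  imports Defs
begin

definition tl5 :: "nat \<Rightarrow> nat" where
  "tl5 a = (if a = 0 then 0 else if a = 1 then 1 else if a = 2 then 0 else if a = 3 then 2 else 1)"
definition hd5 :: "nat \<Rightarrow> nat" where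
  "hd5 a = (if a = 0 then 1 else if a = 1 then 3 else if a = 2 then 2 else if a = 3 then 3 else 2)"

definition Inst :: "(nat, nat, nat) robmcf" where
  "Inst = \<lparr> verts = {0,1,2,3}, arcs = {0,1,2,3,4}, tail = tl5, head = hd5,
          fixed_arcs = {0,3}, cap = (\<lambda>_. 1), cost = (\<lambda>a. if a = 4 then 10 else 0),
          scen = {1,2},
          bal = (\<lambda>l v. if v = 0 then int l else if v = 3 then - int l else 0) \<rparr>"

lemma Inst_simps[simp]: "verts Inst = {0,1,2,3}" "arcs Inst = {0,1,2,3,4}" "tail Inst = tl5" "head Inst = hd5"
  "fixed_arcs Inst = {0,3}" "cap Inst = (\<lambda>_. 1)" "cost Inst = (\<lambda>a. if a = 4 then 10 else 0)"
  "scen Inst = {1,2}" "bal Inst = (\<lambda>l v. if v = 0 then int l else if v = 3 then - int l else 0)"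
  by (simp_all add: Inst_def)

definition FF :: "nat \<Rightarrow> nat \<Rightarrow> nat" where
  "FF l a = (if l = 1 then (if a \<in> {0,3,4} then 1 else 0)
             else (if a \<in> {0,1,2,3} then 1 else 0))"

lemma out0: "{a\<in>arcs Inst. tail Inst a = 0} = {0,2}" by (auto simp: tl5_def)
lemma out1: "{a\<in>arcs Inst. tail Inst a = 1} = {1,4}" by (auto simp: tl5_def)
lemma out2: "{a\<in>arcs Inst. tail Inst a = 2} = {3}" by (auto simp: tl5_def)
lemma out3: "{a\<in>arcs Inst. tail Inst a = 3} = {}" by (auto simp: tl5_def)
lemma in0: "{a\<in>arcs Inst. head Inst a = 0} = {}" by (auto simp: hd5_def)
lemma in1: "{a\<in>arcs Inst. head Inst a = 1} = {0}" by (auto simp: hd5_def)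
lemma in2: "{a\<in>arcs Inst. head Inst a = 2} = {2,4}" by (auto simp: hd5_def)
lemma in3: "{a\<in>arcs Inst. head Inst a = 3} = {1,3}" by (auto simp: hd5_def)

lemmas io = out0 out1 out2 out3 in0 in1 in2 in3

lemma bflow_iff: "is_bflow Inst bl f \<longleftrightarrow>
   (\<forall>a\<in>{0,1,2,3,4::nat}. f a \<le> 1) \<and>
   int (f 0) + int (f 2) = bl 0 \<and>
   int (f 1) + int (f 4) - int (f 0) = bl 1 \<and>
   int (f 3) - (int (f 2) + int (f 4)) = bl 2 \<and>
   - (int (f 1) + int (f 3)) = bl 3"
  unfolding is_bflow_def
  apply (simp only: Inst_simps(1) ball_simps(5,7))
  apply (simp only: io)
  apply simp
  done

lemma wf: "wf_robmcf Inst"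
  by (simp add: wf_robmcf_def tl5_def hd5_def)

lemma acyc: "acyclic_instance Inst"
proof -
  have "arc_rel Inst \<subseteq> less_than"
    by (auto simp: arc_rel_def tl5_def hd5_def)
  hence "wf (arc_rel Inst)" using wf_subset wf_less_than by blast
  thus ?thesis by (simp add: acyclic_instance_def wf_acyclic)
qed

lemma rob: "is_robust_flow Inst FF"
  unfolding is_robust_flow_def
  by (simp add: bflow_iff FF_def)

lemma costs: "flow_cost Inst (FF 1) = 10" "flow_cost Inst (FF 2) = 0"
  by (simp_all add: flow_cost_def FF_def)

lemma rcost: "robust_cost Inst F = max (flow_cost Inst (F 1)) (flow_cost Inst (F 2))"
  by (simp add: robust_cost_def)

lemma lower: assumes "is_robust_flow Inst G" shows "10 \<le> robust_cost Inst G"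
proof -
  have A: "\<forall>l\<in>scen Inst. is_bflow Inst (bal Inst l) (G l)"
    and B: "\<forall>a\<in>fixed_arcs Inst. \<forall>l\<in>scen Inst. \<forall>l'\<in>scen Inst. G l a = G l' a"
    using assms unfolding is_robust_flow_def by blast+
  have s1: "(1::nat) \<in> scen Inst" and s2: "(2::nat) \<in> scen Inst" by simp_all
  have b1: "is_bflow Inst (bal Inst 1) (G 1)" using A s1 by blast
  have b2: "is_bflow Inst (bal Inst 2) (G 2)" using A s2 by blast
  have f0: "(0::nat) \<in> fixed_arcs Inst" and f3: "(3::nat) \<in> fixed_arcs Inst" by simp_all
  have fx: "G 1 0 = G 2 0" "G 1 3 = G 2 3" using B f0 f3 s1 s2 by blast+
  have c1: "int (G 1 0) + int (G 1 2) = 1" "int (G 1 3) - (int (G 1 2) + int (G 1 4)) = 0"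
    using b1 unfolding bflow_iff by simp_all
  have c2: "int (G 2 0) + int (G 2 2) = 2" "- (int (G 2 1) + int (G 2 3)) = -2"
    "G 2 0 \<le> 1" "G 2 2 \<le> 1" "G 2 1 \<le> 1" "G 2 3 \<le> 1"
    using b2 unfolding bflow_iff by simp_all
  have "G 1 4 = 1" using c1 c2 fx by linarith
  hence "flow_cost Inst (G 1) \<ge> 10" by (simp add: flow_cost_def)
  thus ?thesis by (simp add: rcost)
qed

theorem mainTheorem4:
  shows "\<exists>(I :: (nat, nat, nat) robmcf) s t F.
     wf_robmcf I \<and> acyclic_instance I \<and> scen I = {1, 2} \<and>
     unique_source I s \<and> unique_sink I t \<and>
     bal I 1 s < bal I 2 s \<and>
     is_optimal_robust_flow I F \<and>
     flow_cost I (F 2) < flow_cost I (F 1) \<and>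
     flow_cost I (F 1) = robust_cost I F"
proof (intro exI conjI)
  show "wf_robmcf Inst" by (rule wf)
  show "acyclic_instance Inst" by (rule acyc)
  show "scen Inst = {1,2}" by simp
  show "unique_source Inst 0" by (auto simp: unique_source_def)
  show "unique_sink Inst 3" by (auto simp: unique_sink_def)
  show "bal Inst 1 0 < bal Inst 2 0" by simp
  show "is_optimal_robust_flow Inst FF"
    unfolding is_optimal_robust_flow_def
  proof (intro conjI allI impI)
    show "is_robust_flow Inst FF" by (rule rob)
    fix G assume "is_robust_flow Inst G"
    have r: "robust_cost Inst FF = 10" unfolding rcost costs by simp
    from lower[OF \<open>is_robust_flow Inst G\<close>] show "robust_cost Inst FF \<le> robust_cost Inst G"
      unfolding r .
  qed
  show "flow_cost Inst (FF 2) < flow_cost Inst (FF 1)" unfolding costs by simp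
  show "flow_cost Inst (FF 1) = robust_cost Inst FF" unfolding rcost costs by simp
qed

end
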